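(* In the I/O model, given an OBDD for a boolean function $f$ with $N$ internal nodes stored as a sorted file of node triples, and an assignment $\vec x$ given as a list of pairs $(i,v)$ sorted by variable index, the value $f(\vec x)$ can be computed using $N/B+|\vec x|/B$ I/Os and $O(N+|\vec x|)$ time.
   Context: I/O model: internal memory holds $M$ elements, data is moved between internal memory and external storage in blocks of $B$ consecutive elements, and the cost is the number of block transfers (I/Os). An OBDD over variables $x_0,x_1,\dots$ is a rooted DAG with leaves $\bot,\top$ and internal nodes labelled by a variable index $i$ with low child (for $x_i=\bot$) and high child (for $x_i=\top$), labels strictly increasing along every path. Each internal node has identifier $(i,\mathit{id})$, unique within its level $i$, and nodes are ordered lexicographically by $(i,\mathit{id})$; the OBDD is stored as a file of triples $(\mathit{uid},\mathit{low},\mathit{high})$ (children given as identifiers or leaf values) in that order. *)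

theory Defs
  imports Main "HOL-Library.Product_Lexorder"
begin

text \<open>A node identifier (i, id): level i = variable index, id unique within the level.
  Identifiers are ordered lexicographically (Product_Lexorder).\<close>
type_synonym uid = "nat \<times> nat"

datatype child = Leaf bool | Ref uid

type_synonym node = "uid \<times> child \<times> child"

type_synonym asg = "nat \<times> bool"

definition child_ok :: "node list \<Rightarrow> uid \<Rightarrow> child \<Rightarrow> bool" where
  "child_ok ns u c = (case c of Leaf _ \<Rightarrow> True
                      | Ref v \<Rightarrow> fst u < fst v \<and> v \<in> fst ` set ns)"

definition wf_obdd :: "child \<Rightarrow> node list \<Rightarrow> bool" where
  "wf_obdd root ns =
     (sorted_wrt (<) (map fst ns)
      \<and> (\<forall>(u, l, h) \<in> set ns. child_ok ns u l \<and> child_ok ns u h)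
      \<and> (case root of Leaf _ \<Rightarrow> True | Ref v \<Rightarrow> v \<in> fst ` set ns))"

inductive obdd_val :: "node list \<Rightarrow> (nat \<Rightarrow> bool) \<Rightarrow> child \<Rightarrow> bool \<Rightarrow> bool"
  for ns a where
  leaf: "obdd_val ns a (Leaf b) b"
| node_hi: "(u, l, h) \<in> set ns \<Longrightarrow> a (fst u) \<Longrightarrow> obdd_val ns a h b \<Longrightarrow> obdd_val ns a (Ref u) b"
| node_lo: "(u, l, h) \<in> set ns \<Longrightarrow> \<not> a (fst u) \<Longrightarrow> obdd_val ns a l b \<Longrightarrow> obdd_val ns a (Ref u) b"

definition wf_asg :: "asg list \<Rightarrow> node list \<Rightarrow> bool" where
  "wf_asg xs ns = (sorted_wrt (<) (map fst xs) \<and> (\<forall>u \<in> fst ` set ns. fst u \<in> fst ` set xs))"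

definition asg_fun :: "asg list \<Rightarrow> nat \<Rightarrow> bool" where
  "asg_fun xs i = (case map_of xs i of Some v \<Rightarrow> v | None \<Rightarrow> False)"

text \<open>Internal state: a bounded number of memory cells, each holding one element
  (a node triple, an assignment pair, a child reference) or one bit.\<close>
datatype cell = CNode node | CAsg asg | CChild child | CBit bool

datatype action = Adv1 | Adv2 | Halt bool

text \<open>One step sees the internal cells and the current head element of each input file
  (None past the end), and decides to advance one of the files or to halt with an output.\<close>
type_synonym machine = "cell list \<Rightarrow> node option \<Rightarrow> asg option \<Rightarrow> action \<times> cell list"

text \<open>Cells that may be present after a step: old cells, the current heads, children
  of node cells, and bits (no encoding of unbounded information into one cell).\<close>
definition allowed_cells :: "cell list \<Rightarrow> node option \<Rightarrow> asg option \<Rightarrow> cell set" where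
  "allowed_cells st h1 h2 =
     (let cs = set st \<union> CNode ` set_option h1 \<union> CAsg ` set_option h2
      in cs \<union> {CChild l | u l h. CNode (u, l, h) \<in> cs}
            \<union> {CChild h | u l h. CNode (u, l, h) \<in> cs} \<union> range CBit)"

definition step_ok :: "nat \<Rightarrow> machine \<Rightarrow> bool" where
  "step_ok K m = (\<forall>st h1 h2. length (snd (m st h1 h2)) \<le> K
                              \<and> set (snd (m st h1 h2)) \<subseteq> allowed_cells st h1 h2)"

text \<open>Run with fuel; returns (output, final position in file 1, final position in file 2,
  number of steps).\<close>
fun run :: "machine \<Rightarrow> node list \<Rightarrow> asg list \<Rightarrow> nat \<Rightarrow> cell list \<Rightarrow> nat \<Rightarrow> nat
            \<Rightarrow> (bool \<times> nat \<times> nat \<times> nat) option" where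
  "run m ns xs 0 st p1 p2 = None"
| "run m ns xs (Suc k) st p1 p2 =
     (let h1 = (if p1 < length ns then Some (ns ! p1) else None);
          h2 = (if p2 < length xs then Some (xs ! p2) else None);
          (a, st') = m st h1 h2
      in case a of
           Halt b \<Rightarrow> Some (b, p1, p2, 1)
         | Adv1 \<Rightarrow> map_option (\<lambda>(b, q1, q2, t). (b, q1, q2, Suc t)) (run m ns xs k st' (Suc p1) p2)
         | Adv2 \<Rightarrow> map_option (\<lambda>(b, q1, q2, t). (b, q1, q2, Suc t)) (run m ns xs k st' p1 (Suc p2)))"

text \<open>I/Os for a file of length len scanned sequentially (one buffer block of size B) when
  the head element at position p has been inspected last: blocks 0 .. p div B, capped at
  the file length.\<close>
definition scan_ios :: "nat \<Rightarrow> nat \<Rightarrow> nat \<Rightarrow> nat" where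
  "scan_ios B len p = (min (Suc p) len + B - 1) div B"

definition ceil_div :: "nat \<Rightarrow> nat \<Rightarrow> nat" where
  "ceil_div n B = (n + B - 1) div B"

end

theory Submission
  imports Defs
begin

definition mach :: machine where
"mach st h1 h2 = (case st of
   [CChild (Leaf b)] \<Rightarrow> (Halt b, [])
 | [CChild (Ref v)] \<Rightarrow> (case h1 of None \<Rightarrow> (Halt False, [])
     | Some (u, l, h) \<Rightarrow> if u < v then (Adv1, [CChild (Ref v)]) else if u = v then
         (case h2 of None \<Rightarrow> (Halt False, [])
          | Some (i, val) \<Rightarrow> if i < fst v then (Adv2, [CChild (Ref v)])
               else if i = fst v then (Adv1, [CChild (if val then h else l)]) else (Halt False, []))
       else (Halt False, []))
 | _ \<Rightarrow> (Halt False, []))"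

lemma mach_ok: "step_ok 1 mach"
  unfolding step_ok_def
proof (intro allI)
  fix st :: "cell list" and h1 h2
  show "length (snd (mach st h1 h2)) \<le> 1 \<and> set (snd (mach st h1 h2)) \<subseteq> allowed_cells st h1 h2"
  proof -
    have "snd (mach st h1 h2) = [] \<or> (snd (mach st h1 h2) = st \<and> length st = 1) \<or>
      (\<exists>u l h. h1 = Some (u,l,h) \<and> (snd (mach st h1 h2) = [CChild l] \<or> snd (mach st h1 h2) = [CChild h]))"
      unfolding mach_def
      by (simp split: list.split cell.split child.split option.split prod.split if_split)
    moreover have "set st \<subseteq> allowed_cells st h1 h2" unfolding allowed_cells_def Let_def by blast
    moreover have "CChild l \<in> allowed_cells st h1 h2 \<and> CChild h \<in> allowed_cells st h1 h2"
      if hh: "h1 = Some (u,l,h)" for u l h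
    proof -
      have "CNode (u,l,h) \<in> set st \<union> CNode ` set_option h1 \<union> CAsg ` set_option h2" using hh by simp
      then show ?thesis unfolding allowed_cells_def Let_def by blast
    qed
    ultimately show ?thesis by (elim disjE exE conjE) auto
  qed
qed


abbreviation hd1 :: "node list \<Rightarrow> nat \<Rightarrow> node option" where
  "hd1 ns p \<equiv> (if p < length ns then Some (ns ! p) else None)"
abbreviation hd2 :: "asg list \<Rightarrow> nat \<Rightarrow> asg option" where
  "hd2 xs p \<equiv> (if p < length xs then Some (xs ! p) else None)"

lemma run_adv1:
  assumes "mach st (hd1 ns p1) (hd2 xs p2) = (Adv1, st')"
  shows "run mach ns xs (Suc k) st p1 p2 = map_option (\<lambda>(b, q1, q2, t). (b, q1, q2, Suc t)) (run mach ns xs k st' (Suc p1) p2)"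
  using assms by (simp add: Let_def)

lemma run_adv2:
  assumes "mach st (hd1 ns p1) (hd2 xs p2) = (Adv2, st')"
  shows "run mach ns xs (Suc k) st p1 p2 = map_option (\<lambda>(b, q1, q2, t). (b, q1, q2, Suc t)) (run mach ns xs k st' p1 (Suc p2))"
  using assms by (simp add: Let_def)

lemma run_halt:
  assumes "mach st (hd1 ns p1) (hd2 xs p2) = (Halt b, st')"
  shows "run mach ns xs (Suc k) st p1 p2 = Some (b, p1, p2, 1)"
  using assms by (simp add: Let_def)

lemma mach_leaf: "mach [CChild (Leaf b)] h1 h2 = (Halt b, [])"
  by (simp add: mach_def)

definition inv :: "node list \<Rightarrow> asg list \<Rightarrow> child \<Rightarrow> nat \<Rightarrow> nat \<Rightarrow> bool" where
"inv ns xs c p1 p2 = (case c of Leaf _ \<Rightarrow> True | Ref v \<Rightarrow>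
   (\<exists>j. p1 \<le> j \<and> j < length ns \<and> fst (ns!j) = v) \<and> (\<exists>k. p2 \<le> k \<and> k < length xs \<and> fst (xs!k) = fst v))"

lemma core:
  assumes wo: "wf_obdd root ns" and wa: "wf_asg xs ns"
  shows "n = (length ns - p1) + (length xs - p2) \<Longrightarrow> p1 \<le> length ns \<Longrightarrow> p2 \<le> length xs \<Longrightarrow> inv ns xs c p1 p2 \<Longrightarrow>
    \<exists>b q1 q2 t. run mach ns xs (Suc n) [CChild c] p1 p2 = Some (b,q1,q2,t) \<and> obdd_val ns (asg_fun xs) c b
      \<and> t \<le> Suc n"
proof (induction n arbitrary: p1 p2 c)
  case 0
  then show ?case
    by (cases c) (auto simp: inv_def mach_leaf intro: obdd_val.leaf)
next
  case (Suc n)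
  have sn: "sorted_wrt (<) (map fst ns)" and sx: "sorted_wrt (<) (map fst xs)"
    using wo wa by (auto simp: wf_obdd_def wf_asg_def)
  show ?case
  proof (cases c)
    case (Leaf b)
    have "run mach ns xs (Suc (Suc n)) [CChild c] p1 p2 = Some (b, p1, p2, 1)"
      unfolding Leaf by (rule run_halt[OF mach_leaf])
    then show ?thesis using Leaf by (auto intro: obdd_val.leaf simp del: run.simps)
  next
    case (Ref v)
    with Suc.prems obtain j k where j: "p1 \<le> j" "j < length ns" "fst (ns!j) = v"
      and k: "p2 \<le> k" "k < length xs" "fst (xs!k) = fst v" by (auto simp: inv_def)
    have p1l: "p1 < length ns" using j by simp
    have p2l: "p2 < length xs" using k by simp
    obtain u l h where nd: "ns ! p1 = (u, l, h)" by (metis prod.exhaust)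
    obtain i val where xd: "xs ! p2 = (i, val)" by (metis prod.exhaust)
    have ord: "\<And>a b. a < b \<Longrightarrow> b < length ns \<Longrightarrow> fst (ns!a) < fst (ns!b)"
    proof -
      fix a b assume "a < b" "b < length ns"
      then have "(map fst ns)!a < (map fst ns)!b" by (intro sorted_wrt_nth_less[OF sn]) simp_all
      then show "fst (ns!a) < fst (ns!b)" using \<open>a < b\<close> \<open>b < length ns\<close> by simp
    qed
    have ordx: "\<And>a b. a < b \<Longrightarrow> b < length xs \<Longrightarrow> fst (xs!a) < fst (xs!b)"
    proof -
      fix a b assume "a < b" "b < length xs"
      then have "(map fst xs)!a < (map fst xs)!b" by (intro sorted_wrt_nth_less[OF sx]) simp_all
      then show "fst (xs!a) < fst (xs!b)" using \<open>a < b\<close> \<open>b < length xs\<close> by simp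
    qed
    have uv: "u \<le> v"
    proof (cases "j = p1")
      case True then show ?thesis using j nd by simp
    next
      case False then show ?thesis using ord[of p1 j] j nd by simp
    qed
    have iv: "i \<le> fst v"
    proof (cases "k = p2")
      case True then show ?thesis using k xd by simp
    next
      case False then show ?thesis using ordx[of p2 k] k xd by simp
    qed
    show ?thesis
    proof (cases "u < v")
      case True
      have jne: "j \<noteq> p1" using True j nd by auto
      have IH: "\<exists>b q1 q2 t. run mach ns xs (Suc n) [CChild c] (Suc p1) p2 = Some (b,q1,q2,t) \<and> obdd_val ns (asg_fun xs) c b
      \<and> t \<le> Suc n"
      proof (rule Suc.IH)
        have "Suc p1 \<le> j" using j jne by simp
        then show "inv ns xs c (Suc p1) p2" using j k Ref unfolding inv_def by auto
      qed (use Suc.prems p1l p2l in auto)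
      then obtain b q1 q2 t where r: "run mach ns xs (Suc n) [CChild c] (Suc p1) p2 = Some (b,q1,q2,t)"
        and ov: "obdd_val ns (asg_fun xs) c b" and tl: "t \<le> Suc n" by blast
      have ms: "mach [CChild c] (hd1 ns p1) (hd2 xs p2) = (Adv1, [CChild c])"
        using True p1l nd Ref by (simp add: mach_def)
      have "run mach ns xs (Suc (Suc n)) [CChild c] p1 p2 = Some (b,q1,q2,Suc t)"
        by (subst run_adv1[OF ms]) (simp add: r del: run.simps)
      then show ?thesis using ov tl by blast
    next
      case False
      with uv have uev: "u = v" by simp
      show ?thesis
      proof (cases "i < fst v")
        case True
        have kne: "k \<noteq> p2" using True k xd by auto
        have IH: "\<exists>b q1 q2 t. run mach ns xs (Suc n) [CChild c] p1 (Suc p2) = Some (b,q1,q2,t) \<and> obdd_val ns (asg_fun xs) c b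
        \<and> t \<le> Suc n"
        proof (rule Suc.IH)
          have "Suc p2 \<le> k" using k kne by simp
          then show "inv ns xs c p1 (Suc p2)" using j k Ref unfolding inv_def by auto
        qed (use Suc.prems p1l p2l in auto)
        then obtain b q1 q2 t where r: "run mach ns xs (Suc n) [CChild c] p1 (Suc p2) = Some (b,q1,q2,t)"
          and ov: "obdd_val ns (asg_fun xs) c b" and tl: "t \<le> Suc n" by blast
        have ms: "mach [CChild c] (hd1 ns p1) (hd2 xs p2) = (Adv2, [CChild c])"
          using True p1l p2l nd xd uev Ref by (simp add: mach_def)
        have "run mach ns xs (Suc (Suc n)) [CChild c] p1 p2 = Some (b,q1,q2,Suc t)"
          by (subst run_adv2[OF ms]) (simp add: r del: run.simps)
        then show ?thesis using ov tl by blast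
      next
        case False
        with iv have iev: "i = fst v" by simp
        define c' where "c' = (if val then h else l)"
        have nin: "(v, l, h) \<in> set ns" using nd uev p1l by (metis nth_mem)
        have xin: "(fst v, val) \<in> set xs" using xd iev p2l by (metis nth_mem)
        have dx: "distinct (map fst xs)" using sx
          by (simp add: strict_sorted_iff)
        have av: "asg_fun xs (fst v) = val"
          using map_of_is_SomeI[OF dx xin] by (simp add: asg_fun_def)
        have cok: "child_ok ns v c'"
          using wo nin unfolding wf_obdd_def c'_def by auto
        have inv': "inv ns xs c' (Suc p1) p2"
        proof (cases c')
          case (Leaf x) then show ?thesis by (simp add: inv_def)
        next
          case (Ref w)
          with cok have lt: "fst v < fst w" and win: "w \<in> fst ` set ns"
            by (auto simp: child_ok_def)
          from win obtain nd' where "nd' \<in> set ns" "fst nd' = w" by (elim imageE) simp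
          then obtain j' where j': "j' < length ns" "fst (ns!j') = w"
            by (metis in_set_conv_nth)
          have "j' > p1"
          proof (rule ccontr)
            assume "\<not> p1 < j'"
            then have "j' < p1 \<or> j' = p1" by auto
            then show False
            proof
              assume "j' < p1" then have "w < u" using ord[of j' p1] p1l j' nd by simp
              then show False using lt uev by (auto simp: less_prod_def)
            next
              assume "j' = p1" then show False using j' nd uev lt by simp
            qed
          qed
          moreover have "fst w \<in> fst ` set xs" using wa win by (auto simp: wf_asg_def)
          then obtain ad' where "ad' \<in> set xs" "fst ad' = fst w" by (elim imageE) simp
          then obtain k' where k': "k' < length xs" "fst (xs!k') = fst w"
            by (metis in_set_conv_nth)
          have "k' \<ge> p2"
          proof (rule ccontr)
            assume "\<not> p2 \<le> k'"
            then have "fst (xs!k') < i" using ordx[of k' p2] p2l xd by simp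
            then show False using k' iev lt by simp
          qed
          ultimately have "Suc p1 \<le> j'" "p2 \<le> k'" by simp_all
          then show ?thesis using Ref j' k' unfolding inv_def by auto
        qed
        have IH: "\<exists>b q1 q2 t. run mach ns xs (Suc n) [CChild c'] (Suc p1) p2 = Some (b,q1,q2,t) \<and> obdd_val ns (asg_fun xs) c' b
        \<and> t \<le> Suc n"
          apply (rule Suc.IH)
          using Suc.prems p1l p2l inv' by auto
        then obtain b q1 q2 t where r: "run mach ns xs (Suc n) [CChild c'] (Suc p1) p2 = Some (b,q1,q2,t)"
          and ov: "obdd_val ns (asg_fun xs) c' b" and tl: "t \<le> Suc n" by blast
        have ov2: "obdd_val ns (asg_fun xs) (Ref v) b"
        proof (cases val)
          case True then show ?thesis using ov nin av c'_def by (auto intro: obdd_val.node_hi)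
        next
          case False then show ?thesis using ov nin av c'_def by (auto intro: obdd_val.node_lo)
        qed
        have "run mach ns xs (Suc (Suc n)) [CChild c] p1 p2 = Some (b,q1,q2,Suc t)"
        proof -
          have ms: "mach [CChild c] (hd1 ns p1) (hd2 xs p2) = (Adv1, [CChild c'])"
            using p1l p2l nd xd uev iev Ref by (simp add: mach_def c'_def)
          show ?thesis by (subst run_adv1[OF ms]) (simp add: r del: run.simps)
        qed
        then show ?thesis using ov2 tl Ref by auto
      qed
    qed
  qed
qed

theorem lemma10:
  "\<exists>(K::nat) (c::nat) (m::machine). step_ok K m \<and>
     (\<forall>(B::nat) (M::nat) (root::child) (ns::node list) (xs::asg list).
        1 \<le> B \<longrightarrow> 2 * B + K \<le> M \<longrightarrow> wf_obdd root ns \<longrightarrow> wf_asg xs ns \<longrightarrow>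
        (\<exists>fuel b p1 p2 t. run m ns xs fuel [CChild root] 0 0 = Some (b, p1, p2, t)
           \<and> obdd_val ns (asg_fun xs) root b
           \<and> scan_ios B (length ns) p1 + scan_ios B (length xs) p2
               \<le> ceil_div (length ns) B + ceil_div (length xs) B
           \<and> t \<le> c * (length ns + length xs + 1)))"
proof (rule exI[of _ 1], rule exI[of _ 1], rule exI[of _ mach], rule conjI[OF mach_ok], intro allI impI)
  fix B M :: nat and root ns xs
  assume "1 \<le> B" "2 * B + 1 \<le> M" and wo: "wf_obdd root ns" and wa: "wf_asg xs ns"
  have sio: "\<And>len p. scan_ios B len p \<le> ceil_div len B"
    unfolding scan_ios_def ceil_div_def by (intro div_le_mono) simp
  have i0: "inv ns xs root 0 0"
  proof (cases root)
    case (Leaf x) then show ?thesis by (simp add: inv_def)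
  next
    case (Ref v)
    with wo have "v \<in> fst ` set ns" by (simp add: wf_obdd_def)
    moreover from this wa have "fst v \<in> fst ` set xs" by (auto simp add: wf_asg_def)
    ultimately obtain nd ad where "nd \<in> set ns" "fst nd = v" "ad \<in> set xs" "fst ad = fst v"
      by (elim imageE) metis
    then obtain j k where "j < length ns" "fst (ns!j) = v" "k < length xs" "fst (xs!k) = fst v"
      by (metis in_set_conv_nth)
    then show ?thesis using Ref by (auto simp: inv_def)
  qed
  have "\<exists>b q1 q2 t. run mach ns xs (Suc (length ns + length xs)) [CChild root] 0 0 = Some (b,q1,q2,t)
    \<and> obdd_val ns (asg_fun xs) root b \<and> t \<le> Suc (length ns + length xs)"
    by (rule core[OF wo wa _ le0 le0 i0]) simp
  then obtain b q1 q2 t where r: "run mach ns xs (Suc (length ns + length xs)) [CChild root] 0 0 = Some (b,q1,q2,t)"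
    "obdd_val ns (asg_fun xs) root b" "t \<le> Suc (length ns + length xs)" by blast
  have tl: "t \<le> 1 * (length ns + length xs + 1)" using r(3) by simp
  have io: "scan_ios B (length ns) q1 + scan_ios B (length xs) q2
               \<le> ceil_div (length ns) B + ceil_div (length xs) B"
    by (rule add_mono[OF sio sio])
  show "\<exists>fuel b p1 p2 t. run mach ns xs fuel [CChild root] 0 0 = Some (b, p1, p2, t)
           \<and> obdd_val ns (asg_fun xs) root b
           \<and> scan_ios B (length ns) p1 + scan_ios B (length xs) p2
               \<le> ceil_div (length ns) B + ceil_div (length xs) B
           \<and> t \<le> 1 * (length ns + length xs + 1)"
    apply (rule exI[of _ "Suc (length ns + length xs)"])
    apply (rule exI[of _ b], rule exI[of _ q1], rule exI[of _ q2], rule exI[of _ t])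
    using r io tl by blast
qed

end
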